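(* Let $\varphi:\mathfrak{h}\to V^*$ be a complex factorization structure and $i,j\in\{1,\ldots,m\}$. The factorization curves $\psi_i$ and $\psi_j$ have the same image if and only if there exists an invertible projective transformation $\Phi_{ji}:\mathbb{P}(V_i)\to\mathbb{P}(V_j)$ such that $\psi_i(\ell)=\psi_j(\Phi_{ji}(\ell))$ for all $\ell\in\mathbb{P}(V_i)$.
   Context: $V_1,\ldots,V_m$ are 2-dimensional complex vector spaces, $V^*=V_1^*\otimes\cdots\otimes V_m^*$, $\Sigma^0_{j,\ell}=V_1^*\otimes\cdots\otimes\ell^0\otimes\cdots\otimes V_m^*$ ($\ell^0$ the annihilator of $\ell$, in slot $j$). A factorization structure of dimension $m$ is an injective linear map $\varphi:\mathfrak{h}\to V^*$, $\dim\mathfrak{h}=m+1$, with $\dim(\varphi(\mathfrak{h})\cap\Sigma^0_{j,\ell})=1$ for all $j$ and all $\ell$ in a nonempty Zariski-open subset of $\mathbb{P}(V_j)$. The $j$-th factorization curve $\psi_j:\mathbb{P}(V_j)\to\mathbb{P}(\mathfrak{h})$ is the unique regular extension to $\mathbb{P}(V_j)$ of the generically defined regular map $\ell\mapsto\varphi^{-1}(\varphi(\mathfrak{h})\cap\Sigma^0_{j,\ell})$. *)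

theory Defs
  imports "HOL-Analysis.Analysis"
begin

text \<open>Model: after choosing bases, each V_k is complex^2, its dual V_k^* is complex^2 with the
pairing below, V^* = V_1^* \<otimes> ... \<otimes> V_m^* is complex^(bool^'m) (slots indexed by the finite
type 'm, so m = CARD('m); in slot k, False/True index the two basis covectors), and
h is complex^'h with CARD('h) = m + 1. All linear algebra is complex-linear (vec.*).\<close>

definition pairing :: "complex^2 \<Rightarrow> complex^2 \<Rightarrow> complex" where
  "pairing a v = a$1 * v$1 + a$2 * v$2"

definition annihilator :: "(complex^2) set \<Rightarrow> (complex^2) set" where
  "annihilator L = {a. \<forall>v\<in>L. pairing a v = 0}"

text \<open>Elementary tensor alpha_1 \<otimes> ... \<otimes> alpha_m.\<close>
definition elem_tensor :: "('m::finite \<Rightarrow> complex^2) \<Rightarrow> complex^(bool^'m)" where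
  "elem_tensor \<alpha> = (\<chi> s. \<Prod>k\<in>UNIV. \<alpha> k $ (if s$k then 2 else 1))"

text \<open>Sigma^0_{j,l} = V_1^* \<otimes> ... \<otimes> l^0 \<otimes> ... \<otimes> V_m^* (l^0 in slot j).\<close>
definition Sigma0 :: "'m::finite \<Rightarrow> (complex^2) set \<Rightarrow> (complex^(bool^'m)) set" where
  "Sigma0 j L = vec.span {elem_tensor \<alpha> | \<alpha>. \<alpha> j \<in> annihilator L}"

text \<open>Projective space P(W): the set of one-dimensional subspaces of W.\<close>
definition proj_points :: "((complex^'n) set) set" where
  "proj_points = {L. vec.subspace L \<and> vec.dim L = 1}"

text \<open>Zariski-open subsets of P^1 = P(complex^2): the empty set and the complements of finite sets.\<close>
definition zariski_open_P1 :: "(complex^2) set set \<Rightarrow> bool" where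
  "zariski_open_P1 U \<longleftrightarrow> U \<subseteq> proj_points \<and> (U = {} \<or> finite (proj_points - U))"

definition factorization_structure :: "(complex^'h \<Rightarrow> complex^(bool^'m::finite)) \<Rightarrow> bool" where
  "factorization_structure \<phi> \<longleftrightarrow>
     CARD('h) = CARD('m) + 1 \<and> Vector_Spaces.linear (*s) (*s) \<phi> \<and> inj \<phi> \<and>
     (\<forall>j::'m. \<exists>U. zariski_open_P1 U \<and> U \<noteq> {} \<and>
        (\<forall>L\<in>U. vec.dim (range \<phi> \<inter> Sigma0 j L) = 1))"

text \<open>Homogeneous polynomial map of degree d: v \<mapsto> (sum_{a\<le>d} p k a * v1^a * v2^(d-a))_k.\<close>
definition hom_poly_map :: "nat \<Rightarrow> ('h \<Rightarrow> nat \<Rightarrow> complex) \<Rightarrow> complex^2 \<Rightarrow> complex^'h::finite" where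
  "hom_poly_map d p v = (\<chi> k. \<Sum>a\<le>d. p k a * v$1 ^ a * v$2 ^ (d - a))"

text \<open>Regular maps P^1 \<rightarrow> P(h): given by homogeneous polynomials of a common degree
without common zero.\<close>
definition regular_map_P1 :: "((complex^2) set \<Rightarrow> (complex^'h::finite) set) \<Rightarrow> bool" where
  "regular_map_P1 \<psi> \<longleftrightarrow> (\<exists>d p. \<forall>v::complex^2. v \<noteq> 0 \<longrightarrow>
       hom_poly_map d p v \<noteq> 0 \<and> \<psi> (vec.span {v}) = vec.span {hom_poly_map d p v})"

text \<open>psi is the j-th factorization curve: a regular map P(V_j) \<rightarrow> P(h) extending the
generically defined map l \<mapsto> phi^{-1}(phi(h) \<inter> Sigma^0_{j,l}) (which is then unique).\<close>
definition factorization_curve ::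
  "(complex^'h \<Rightarrow> complex^(bool^'m::finite)) \<Rightarrow> 'm \<Rightarrow> ((complex^2) set \<Rightarrow> (complex^'h::finite) set) \<Rightarrow> bool" where
  "factorization_curve \<phi> j \<psi> \<longleftrightarrow> regular_map_P1 \<psi> \<and>
     (\<exists>U. zariski_open_P1 U \<and> U \<noteq> {} \<and>
        (\<forall>L\<in>U. vec.dim (range \<phi> \<inter> Sigma0 j L) = 1 \<and> \<psi> L = \<phi> -` (range \<phi> \<inter> Sigma0 j L)))"

end

theory Submission imports Defs "HOL-Computational_Algebra.Polynomial" "HOL-Computational_Algebra.Fundamental_Theorem_Algebra" "HOL-Computational_Algebra.Polynomial_Factorial" "HOL-Computational_Algebra.Field_as_Ring" begin

inductive form :: "nat \<Rightarrow> (complex^2 \<Rightarrow> complex) \<Rightarrow> bool" where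
  fconst: "form 0 (\<lambda>v. c)"
| fadd: "form n f \<Longrightarrow> form n g \<Longrightarrow> form n (\<lambda>v. f v + g v)"
| fx: "form n f \<Longrightarrow> form (Suc n) (\<lambda>v. v$1 * f v)"
| fy: "form n f \<Longrightarrow> form (Suc n) (\<lambda>v. v$2 * f v)"

lemma form_zero: "form n (\<lambda>v. 0)"
proof (induction n)
  case 0 then show ?case using fconst[of 0] by simp
next
  case (Suc n) then show ?case using fx[OF Suc] by simp
qed

lemma form_scale: "form n f \<Longrightarrow> form n (\<lambda>v. c * f v)"
proof (induction rule: form.induct)
  case (fconst d) then show ?case using form.fconst by simp
next
  case (fadd n f g) then show ?case using form.fadd[OF fadd.IH] by (simp add: algebra_simps)
next
  case (fx n f) then show ?case using form.fx[OF fx.IH] by (simp add: algebra_simps)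
next
  case (fy n f) then show ?case using form.fy[OF fy.IH] by (simp add: algebra_simps)
qed

lemma form_mult: "form n f \<Longrightarrow> form m g \<Longrightarrow> form (n+m) (\<lambda>v. f v * g v)"
proof (induction rule: form.induct)
  case (fconst d) then show ?case using form_scale by simp
next
  case (fadd n f1 f2) then show ?case using form.fadd[OF fadd.IH] by (simp add: algebra_simps)
next
  case (fx n f) then show ?case using form.fx[OF fx.IH] by (simp add: algebra_simps)
next
  case (fy n f) then show ?case using form.fy[OF fy.IH] by (simp add: algebra_simps)
qed

lemma form_sum: "finite A \<Longrightarrow> (\<And>a. a \<in> A \<Longrightarrow> form n (f a)) \<Longrightarrow> form n (\<lambda>v. \<Sum>a\<in>A. f a v)"
proof (induction A rule: finite_induct)
  case empty then show ?case using form_zero by simp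
next
  case (insert x F) then show ?case using fadd[of n "f x" "\<lambda>v. \<Sum>a\<in>F. f a v"] by simp
qed

lemma form_x: "form 1 (\<lambda>v. v$1)" using fx[OF fconst[of 1]] by simp
lemma form_y: "form 1 (\<lambda>v. v$2)" using fy[OF fconst[of 1]] by simp

lemma form_pow: "form 1 g \<Longrightarrow> form k (\<lambda>v. g v ^ k)"
proof (induction k)
  case 0 then show ?case using fconst[of 1] by simp
next
  case (Suc k) then show ?case using form_mult[of 1 g k "\<lambda>v. g v ^ k"] by simp
qed

lemma form_hom: "form d (\<lambda>v. hom_poly_map d p v $ k)"
proof -
  have "form d (\<lambda>v. p k a * v$1 ^ a * v$2 ^ (d - a))" if "a \<le> d" for a
  proof -
    have "form (a + (d-a)) (\<lambda>v. v$1 ^ a * v$2 ^ (d - a))"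
      by (rule form_mult[OF form_pow[OF form_x] form_pow[OF form_y]])
    then have "form d (\<lambda>v. v$1 ^ a * v$2 ^ (d - a))" using that by simp
    from form_scale[OF this, of "p k a"] show ?thesis by (simp add: mult.assoc)
  qed
  then show ?thesis unfolding hom_poly_map_def
    using form_sum[of "{..d}" d "\<lambda>a v. p k a * v$1 ^ a * v$2 ^ (d - a)"] by simp
qed

lemma form_comp: "form n f \<Longrightarrow> form 1 g1 \<Longrightarrow> form 1 g2 \<Longrightarrow> form n (\<lambda>v. f (vector [g1 v, g2 v]))"
proof (induction rule: form.induct)
  case (fconst c) then show ?case using form.fconst by simp
next
  case (fadd n f g) then show ?case using form.fadd by simp
next
  case (fx n f) then show ?case using form_mult[of 1 g1 n] by simp
next
  case (fy n f) then show ?case using form_mult[of 1 g2 n] by simp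
qed

lemma form_coeffs: "form n f \<Longrightarrow> \<exists>c. \<forall>v. f v = (\<Sum>a\<le>n. c a * v$1^a * v$2^(n-a))"
proof (induction rule: form.induct)
  case (fconst c) then show ?case by (intro exI[of _ "\<lambda>_. c"]) simp
next
  case (fadd n f g)
  then obtain c1 c2 where "\<forall>v. f v = (\<Sum>a\<le>n. c1 a * v$1^a * v$2^(n-a))"
      "\<forall>v. g v = (\<Sum>a\<le>n. c2 a * v$1^a * v$2^(n-a))" by blast
  then show ?case
    by (intro exI[of _ "\<lambda>a. c1 a + c2 a"]) (simp add: sum.distrib algebra_simps)
next
  case (fx n f)
  then obtain c where c: "\<forall>v. f v = (\<Sum>a\<le>n. c a * v$1^a * v$2^(n-a))" by blast
  show ?case
  proof (intro exI[of _ "\<lambda>a. if a = 0 then 0 else c (a - 1)"] allI)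
    fix v :: "complex^2"
    show "v$1 * f v = (\<Sum>a\<le>Suc n. (if a = 0 then 0 else c (a - 1)) * v$1^a * v$2^(Suc n - a))"
      unfolding sum.atMost_Suc_shift using c by (simp add: sum_distrib_left algebra_simps)
  qed
next
  case (fy n f)
  then obtain c where c: "\<forall>v. f v = (\<Sum>a\<le>n. c a * v$1^a * v$2^(n-a))" by blast
  show ?case
  proof (intro exI[of _ "\<lambda>a. if a \<le> n then c a else 0"] allI)
    fix v :: "complex^2"
    have "(\<Sum>a\<le>Suc n. (if a \<le> n then c a else 0) * v$1^a * v$2^(Suc n - a))
        = (\<Sum>a\<le>n. c a * v$1^a * v$2^(Suc n - a))" by simp
    also have "\<dots> = (\<Sum>a\<le>n. v$2 * (c a * v$1^a * v$2^(n - a)))"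
      by (intro sum.cong refl) (simp add: Suc_diff_le algebra_simps)
    finally show "v$2 * f v = (\<Sum>a\<le>Suc n. (if a \<le> n then c a else 0) * v$1^a * v$2^(Suc n - a))"
      using c by (simp add: sum_distrib_left)
  qed
qed

lemma form_vanish:
  assumes "form n f" "infinite {t. f (vector [t, 1]) = 0}"
  shows "f v = 0"
proof -
  obtain c where c: "\<forall>v. f v = (\<Sum>a\<le>n. c a * v$1^a * v$2^(n-a))" using form_coeffs[OF assms(1)] by blast
  have e: "f (vector [t, 1]) = (\<Sum>a\<le>n. c a * t^a)" for t using c by simp
  have "c a = 0" if "a \<le> n" for a
  proof (rule ccontr)
    assume "c a \<noteq> 0"
    then have "finite {z. (\<Sum>i\<le>n. c i * z ^ i) = 0}" using that
      by (intro polyfun_rootbound_finite) blast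
    with assms(2) show False unfolding e by simp
  qed
  then show ?thesis using c by simp
qed

lemma form_poly:
  assumes "form n f"
  shows "\<exists>q. \<forall>t. f (vector [t, 1]) = poly q t"
proof -
  obtain c where c: "\<forall>v. f v = (\<Sum>a\<le>n. c a * v$1^a * v$2^(n-a))" using form_coeffs[OF assms(1)] by blast
  show ?thesis
    by (intro exI[of _ "\<Sum>a\<le>n. monom (c a) a"]) (simp add: c poly_sum poly_monom)
qed

definition upd :: "bool^'m \<Rightarrow> 'm \<Rightarrow> bool \<Rightarrow> bool^'m" where
  "upd s k b = (\<chi> l. if l = k then b else s$l)"

lemma upd_self: "upd s k (s$k) = s"
  by (simp add: upd_def vec_eq_iff)

lemma elem_tensor_upd:
  fixes \<alpha> :: "'m::finite \<Rightarrow> complex^2"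
  shows "elem_tensor \<alpha> $ upd s k b = \<alpha> k $ (if b then 2 else 1) * (\<Prod>l\<in>UNIV-{k}. \<alpha> l $ (if s$l then 2 else 1))"
proof -
  have "elem_tensor \<alpha> $ upd s k b = (\<Prod>l\<in>UNIV. \<alpha> l $ (if upd s k b $ l then 2 else 1))"
    by (simp add: elem_tensor_def)
  also have "\<dots> = \<alpha> k $ (if b then 2 else 1) * (\<Prod>l\<in>UNIV-{k}. \<alpha> l $ (if upd s k b $ l then 2 else 1))"
    by (subst prod.remove[of UNIV k]) (auto simp: upd_def)
  also have "(\<Prod>l\<in>UNIV-{k}. \<alpha> l $ (if upd s k b $ l then 2 else 1)) = (\<Prod>l\<in>UNIV-{k}. \<alpha> l $ (if s$l then 2 else 1))"
    by (intro prod.cong refl) (auto simp: upd_def)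
  finally show ?thesis .
qed

lemma sigma_eq:
  fixes t :: "complex^(bool^'m::finite)"
  assumes "t \<in> Sigma0 k (vec.span {v})"
  shows "v$1 * t $ upd s k False + v$2 * t $ upd s k True = 0"
  using assms unfolding Sigma0_def
proof (induction rule: vec.span_induct_alt)
  case base then show ?case by simp
next
  case (step c x y)
  then obtain \<alpha> where x: "x = elem_tensor \<alpha>" and a: "\<alpha> k \<in> annihilator (vec.span {v})" by blast
  have "pairing (\<alpha> k) v = 0" using a vec.span_base[of v "{v}"] by (auto simp: annihilator_def)
  then have "v$1 * x $ upd s k False + v$2 * x $ upd s k True = 0"
    unfolding x elem_tensor_upd
  proof -
    assume "pairing (\<alpha> k) v = 0"
    then have "(v$1 * \<alpha> k $ 1 + v$2 * \<alpha> k $ 2) * (\<Prod>l\<in>UNIV-{k}. \<alpha> l $ (if s$l then 2 else 1)) = 0"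
      by (simp add: pairing_def algebra_simps)
    then show "v$1 * (\<alpha> k $ (if False then 2 else 1) * (\<Prod>l\<in>UNIV-{k}. \<alpha> l $ (if s$l then 2 else 1))) +
      v$2 * (\<alpha> k $ (if True then 2 else 1) * (\<Prod>l\<in>UNIV-{k}. \<alpha> l $ (if s$l then 2 else 1))) = 0"
      by (simp add: algebra_simps)
  qed
  moreover have "v$1 * (c *s x + y) $ upd s k False + v$2 * (c *s x + y) $ upd s k True
     = c * (v$1 * x $ upd s k False + v$2 * x $ upd s k True) + (v$1 * y $ upd s k False + v$2 * y $ upd s k True)"
    by (simp add: algebra_simps)
  ultimately show ?case using step(2) by simp
qed

definition E :: "(complex^'h \<Rightarrow> complex^(bool^'m)) \<Rightarrow> 'm \<Rightarrow> complex^2 \<Rightarrow> complex^'h \<Rightarrow> bool" where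
  "E \<phi> k v x \<longleftrightarrow> (\<forall>s. v$1 * \<phi> x $ upd s k False + v$2 * \<phi> x $ upd s k True = 0)"

lemma E_scale:
  assumes "Vector_Spaces.linear (*s) (*s) \<phi>" "E \<phi> k v x"
  shows "E \<phi> k v (c *s x)"
proof -
  interpret l: Vector_Spaces.linear "(*s)" "(*s)" \<phi> by fact
  show ?thesis unfolding E_def l.scale
  proof
    fix s
    have "v$1 * \<phi> x $ upd s k False + v$2 * \<phi> x $ upd s k True = 0" using assms(2) by (simp add: E_def)
    then have "c * (v$1 * \<phi> x $ upd s k False + v$2 * \<phi> x $ upd s k True) = 0" by simp
    then show "v$1 * (c *s \<phi> x) $ upd s k False + v$2 * (c *s \<phi> x) $ upd s k True = 0"
      by (simp add: algebra_simps)
  qed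
qed

lemma E_inj:
  fixes \<phi> :: "complex^'h::finite \<Rightarrow> complex^(bool^'m::finite)"
  assumes "Vector_Spaces.linear (*s) (*s) \<phi>" "inj \<phi>" "E \<phi> k v x" "E \<phi> k w x"
    and "v$1 * w$2 - v$2 * w$1 \<noteq> 0"
  shows "x = 0"
proof -
  interpret l: Vector_Spaces.linear "(*s)" "(*s)" \<phi> by fact
  have z: "\<phi> x $ upd s k False = 0 \<and> \<phi> x $ upd s k True = 0" for s
  proof -
    define A where "A = \<phi> x $ upd s k False"
    define B where "B = \<phi> x $ upd s k True"
    have 1: "v$1 * A + v$2 * B = 0" and 2: "w$1 * A + w$2 * B = 0"
      using assms(3,4) by (auto simp: E_def A_def B_def)
    have "(v$1 * w$2 - v$2 * w$1) * A = w$2 * (v$1 * A + v$2 * B) - v$2 * (w$1 * A + w$2 * B)"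
      by (simp add: algebra_simps)
    then have "A = 0" using 1 2 assms(5) by simp
    have "(v$1 * w$2 - v$2 * w$1) * B = v$1 * (w$1 * A + w$2 * B) - w$1 * (v$1 * A + v$2 * B)"
      by (simp add: algebra_simps)
    then have "B = 0" using 1 2 assms(5) by simp
    with \<open>A = 0\<close> show ?thesis by (simp add: A_def B_def)
  qed
  have "\<phi> x $ r = 0" for r
    using z[of r] upd_self[of r k] by (cases "r$k") auto
  then have "\<phi> x = \<phi> 0" by (simp add: vec_eq_iff l.zero)
  then show ?thesis using assms(2) by (meson injD)
qed


lemma proj_points_iff: "L \<in> (proj_points :: (complex^'n) set set) \<longleftrightarrow> (\<exists>v. v \<noteq> 0 \<and> L = vec.span {v})"
proof
  assume "L \<in> proj_points"
  hence S: "vec.subspace L" and D: "vec.dim L = 1" by (auto simp: proj_points_def)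
  obtain B where B: "B \<subseteq> L" "vec.independent B" "L \<subseteq> vec.span B" "card B = vec.dim L"
    using vec.basis_exists by blast
  then obtain v where "B = {v}" using D by (auto simp: card_Suc_eq)
  moreover have "vec.span B \<subseteq> L" using B S by (simp add: vec.span_minimal)
  ultimately show "\<exists>v. v \<noteq> 0 \<and> L = vec.span {v}" using B by auto
next
  assume "\<exists>v. v \<noteq> 0 \<and> L = vec.span {v}"
  then show "L \<in> proj_points" by (auto simp: proj_points_def)
qed

lemma span_eq_scale:
  fixes X Y :: "complex^'n"
  assumes "X \<noteq> 0" "Y \<noteq> 0"
  shows "vec.span {X} = vec.span {Y} \<longleftrightarrow> (\<exists>c. c \<noteq> 0 \<and> Y = c *s X)"
proof
  assume "vec.span {X} = vec.span {Y}"
  then have "Y \<in> vec.span {X}" using vec.span_base[of Y "{Y}"] by simp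
  then obtain c where "Y = c *s X" by (auto simp: vec.span_singleton)
  with assms show "\<exists>c. c \<noteq> 0 \<and> Y = c *s X" by (intro exI[of _ c]) auto
next
  assume "\<exists>c. c \<noteq> 0 \<and> Y = c *s X"
  then obtain c where c: "c \<noteq> 0" "Y = c *s X" by blast
  have "k *s X = (k / c) *s Y" for k using c by (simp add: vector_smult_assoc)
  moreover have "k *s Y = (k * c) *s X" for k using c by (simp add: vector_smult_assoc)
  ultimately show "vec.span {X} = vec.span {Y}"
    unfolding vec.span_singleton
  proof (intro set_eqI iffI)
    fix z assume "z \<in> range (\<lambda>k. k *s X)"
    then obtain k where "z = k *s X" by blast
    then have "z = (k / c) *s Y" using \<open>\<And>k. k *s X = (k / c) *s Y\<close> by simp
    then show "z \<in> range (\<lambda>k. k *s Y)" by blast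
  next
    fix z assume "z \<in> range (\<lambda>k. k *s Y)"
    then obtain k where "z = k *s Y" by blast
    then have "z = (k * c) *s X" using \<open>\<And>k. k *s Y = (k * c) *s X\<close> by simp
    then show "z \<in> range (\<lambda>k. k *s X)" by blast
  qed
qed

lemma span_eq_minors:
  fixes X Y :: "complex^'n"
  assumes "X \<noteq> 0" "Y \<noteq> 0"
  shows "vec.span {X} = vec.span {Y} \<longleftrightarrow> (\<forall>k l. X$k * Y$l = X$l * Y$k)"
proof -
  have "(\<exists>c. c \<noteq> 0 \<and> Y = c *s X) \<longleftrightarrow> (\<forall>k l. X$k * Y$l = X$l * Y$k)"
  proof
    assume "\<exists>c. c \<noteq> 0 \<and> Y = c *s X" then show "\<forall>k l. X$k * Y$l = X$l * Y$k" by auto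
  next
    assume m: "\<forall>k l. X$k * Y$l = X$l * Y$k"
    obtain k where k: "X$k \<noteq> 0" using assms(1) by (auto simp: vec_eq_iff)
    define c where "c = Y$k / X$k"
    have Y: "Y = c *s X"
      unfolding vec_eq_iff c_def using m k by (auto simp: field_simps)
    then have "c \<noteq> 0" using assms(2) by auto
    with Y show "\<exists>c. c \<noteq> 0 \<and> Y = c *s X" by blast
  qed
  then show ?thesis using span_eq_scale[OF assms] by simp
qed

lemma span_eq_2:
  fixes v w :: "complex^2"
  assumes "v \<noteq> 0" "w \<noteq> 0"
  shows "vec.span {v} = vec.span {w} \<longleftrightarrow> v$1 * w$2 = v$2 * w$1"
  unfolding span_eq_minors[OF assms] by (auto simp: forall_2)

lemma vector_2_eta: "vector [v$1, v$2] = (v::'a::zero^2)"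
  by (simp add: vec_eq_iff forall_2)

lemma vector_2_neq0: "vector [a, b] \<noteq> (0::'a::zero^2) \<longleftrightarrow> a \<noteq> 0 \<or> b \<noteq> 0"
  by (auto simp: vec_eq_iff forall_2)

abbreviation e1 :: "complex \<Rightarrow> complex^2" where "e1 t \<equiv> vector [t, 1]"

lemma e1_neq0: "e1 t \<noteq> 0" by (simp add: vector_2_neq0)

lemma e1_span_inj: "inj (\<lambda>t. vec.span {e1 t})"
proof (rule injI)
  fix t1 t2 assume "vec.span {e1 t1} = vec.span {e1 t2}"
  then show "t1 = t2" using span_eq_2[OF e1_neq0 e1_neq0] by simp
qed

lemma e1_span_proj: "vec.span {e1 t} \<in> proj_points"
  using proj_points_iff e1_neq0 by blast

lemma cofinite_good:
  assumes "finite (proj_points - U)"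
  shows "infinite {t. vec.span {e1 t} \<in> U}"
proof -
  let ?f = "\<lambda>t. vec.span {e1 t}"
  have sub: "?f ` {t. ?f t \<notin> U} \<subseteq> proj_points - U" using e1_span_proj by blast
  have fin1: "finite (?f ` {t. ?f t \<notin> U})" by (rule finite_subset[OF sub assms])
  have inj: "inj_on ?f {t. ?f t \<notin> U}" by (rule inj_on_subset[OF e1_span_inj]) simp
  have fin: "finite {t. ?f t \<notin> U}" by (rule finite_imageD[OF fin1 inj])
  have "infinite (UNIV - {t. ?f t \<notin> U})" by (rule Diff_infinite_finite[OF fin infinite_UNIV_char_0])
  moreover have "UNIV - {t. ?f t \<notin> U} = {t. ?f t \<in> U}" by blast
  ultimately show ?thesis by simp
qed

lemma form_scale_r: "form n f \<Longrightarrow> form n (\<lambda>v. f v * c)"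
proof -
  assume "form n f"
  from form_scale[OF this, of c] have "form n (\<lambda>v. c * f v)" .
  moreover have "(\<lambda>v. c * f v) = (\<lambda>v. f v * c)" by (simp add: mult.commute)
  ultimately show ?thesis by simp
qed

lemma form_phi:
  fixes \<phi> :: "complex^'h::finite \<Rightarrow> complex^(bool^'m::finite)"
  assumes "Vector_Spaces.linear (*s) (*s) \<phi>"
  shows "form d (\<lambda>v. \<phi> (hom_poly_map d p v) $ r)"
proof -
  have "form d (\<lambda>v. \<Sum>i\<in>UNIV. (hom_poly_map d p v)$i * (\<phi> (axis i 1)$r))"
    by (intro form_sum form_scale_r form_hom) simp
  moreover have "(\<lambda>v. \<phi> (hom_poly_map d p v) $ r) = (\<lambda>v. \<Sum>i\<in>UNIV. (hom_poly_map d p v)$i * (\<phi> (axis i 1)$r))"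
    by (rule ext) (rule linear_componentwise[OF assms])
  ultimately show ?thesis by simp
qed

lemma curve_facts:
  fixes \<phi> :: "complex^'h::finite \<Rightarrow> complex^(bool^'m::finite)"
  assumes fs: "factorization_structure \<phi>" and fc: "factorization_curve \<phi> k \<psi>"
  shows "\<exists>d p. (\<forall>v. v \<noteq> 0 \<longrightarrow> hom_poly_map d p v \<noteq> 0 \<and> \<psi> (vec.span {v}) = vec.span {hom_poly_map d p v})
            \<and> (\<forall>v. E \<phi> k v (hom_poly_map d p v))"
proof -
  have lin: "Vector_Spaces.linear (*s) (*s) \<phi>" using fs by (simp add: factorization_structure_def)
  obtain d p where P: "\<forall>v::complex^2. v \<noteq> 0 \<longrightarrow> hom_poly_map d p v \<noteq> 0 \<and> \<psi> (vec.span {v}) = vec.span {hom_poly_map d p v}"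
    using fc by (auto simp: factorization_curve_def regular_map_P1_def)
  obtain U where U: "zariski_open_P1 U" "U \<noteq> {}"
    "\<forall>L\<in>U. \<psi> L = \<phi> -` (range \<phi> \<inter> Sigma0 k L)"
    using fc unfolding factorization_curve_def by blast
  have fin: "finite (proj_points - U)" using U by (auto simp: zariski_open_P1_def)
  have "E \<phi> k v (hom_poly_map d p v)" for v
    unfolding E_def
  proof
    fix s
    let ?g = "\<lambda>v. v$1 * \<phi> (hom_poly_map d p v) $ upd s k False + v$2 * \<phi> (hom_poly_map d p v) $ upd s k True"
    have fg: "form (Suc d) ?g"
      by (intro fadd fx fy form_phi lin)
    have "{t. vec.span {e1 t} \<in> U} \<subseteq> {t. ?g (e1 t) = 0}"
    proof
      fix t assume "t \<in> {t. vec.span {e1 t} \<in> U}"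
      then have L: "vec.span {e1 t} \<in> U" by simp
      have "hom_poly_map d p (e1 t) \<in> \<psi> (vec.span {e1 t})"
        using P e1_neq0[of t] vec.span_base[of "hom_poly_map d p (e1 t)"] by auto
      then have "\<phi> (hom_poly_map d p (e1 t)) \<in> Sigma0 k (vec.span {e1 t})" using U(3) L by auto
      from sigma_eq[OF this, of s] show "t \<in> {t. ?g (e1 t) = 0}" by simp
    qed
    then have "infinite {t. ?g (e1 t) = 0}" using cofinite_good[OF fin] finite_subset by blast
    from form_vanish[OF fg this] show "?g v = 0" .
  qed
  with P show ?thesis by blast
qed


lemma poly_has_root: "degree (p::complex poly) > 0 \<Longrightarrow> \<exists>z. poly p z = 0"
  by (intro fundamental_theorem_of_algebra_alt) auto

lemma coprime_no_common_root:
  fixes F G :: "complex poly"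
  assumes "coprime F G" "poly F r = 0" "poly G r = 0"
  shows False
proof -
  have "[:-r, 1:] dvd F" "[:-r, 1:] dvd G" using assms(2,3) by (simp_all add: poly_eq_0_iff_dvd)
  then have "is_unit [:-r, 1:]" using assms(1) coprime_common_divisor by blast
  then show False using is_unit_iff_degree[of "[:-r, 1:]"] by simp
qed

lemma wronskian_nz:
  fixes F G :: "complex poly"
  assumes cop: "coprime F G" and n: "max (degree F) (degree G) > 0"
  shows "pderiv F * G - F * pderiv G \<noteq> 0"
proof
  assume "pderiv F * G - F * pderiv G = 0"
  then have eq: "pderiv F * G = F * pderiv G" by simp
  have F0: "F \<noteq> 0"
  proof
    assume "F = 0"
    then have "is_unit G" using cop by simp
    then have "degree G = 0" by (cases "G = 0") (auto simp: is_unit_iff_degree)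
    with n \<open>F = 0\<close> show False by simp
  qed
  have "F dvd pderiv F * G" using eq by simp
  then have "F dvd pderiv F" using cop coprime_dvd_mult_left_iff by blast
  have dF: "degree F = 0"
  proof (rule ccontr)
    assume "degree F \<noteq> 0"
    then have "pderiv F \<noteq> 0" by (simp add: pderiv_eq_0_iff)
    then have "degree F \<le> degree (pderiv F)" using \<open>F dvd pderiv F\<close> dvd_imp_degree_le by blast
    with \<open>degree F \<noteq> 0\<close> show False by (simp add: degree_pderiv)
  qed
  then have "pderiv F = 0" by (simp add: pderiv_eq_0_iff)
  then have "F * pderiv G = 0" using eq by simp
  then have "pderiv G = 0" using F0 by simp
  then have "degree G = 0" by (simp add: pderiv_eq_0_iff)
  with dF n show False by simp
qed

lemma deg_le1:
  fixes F G :: "complex poly"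
  assumes cop: "coprime F G" and fin: "finite S"
    and inj: "\<And>t1 t2. t1 \<notin> S \<Longrightarrow> t2 \<notin> S \<Longrightarrow> poly F t1 * poly G t2 = poly F t2 * poly G t1 \<Longrightarrow> t1 = t2"
  shows "degree F \<le> 1 \<and> degree G \<le> 1"
proof (rule ccontr)
  define n where "n = max (degree F) (degree G)"
  assume "\<not> (degree F \<le> 1 \<and> degree G \<le> 1)"
  then have n2: "n \<ge> 2" by (auto simp: n_def)
  define W where "W = pderiv F * G - F * pderiv G"
  have W0: "W \<noteq> 0" unfolding W_def using wronskian_nz[OF cop] n2 n_def by simp
  define B where "B = (\<lambda>r. poly F r / poly G r) ` ({r. poly W r = 0} \<union> S) \<union> {coeff F n / coeff G n}"
  have "finite B" unfolding B_def using poly_roots_finite[OF W0] fin by simp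
  then obtain c where c: "c \<notin> B" using ex_new_if_finite[OF infinite_UNIV_char_0] by blast
  define h where "h = F - smult c G"
  have ch: "coeff h n \<noteq> 0"
  proof (cases "coeff G n = 0")
    case True
    have "G = 0 \<or> degree G < n"
    proof (rule ccontr)
      assume "\<not> (G = 0 \<or> degree G < n)"
      then have "degree G = n" "G \<noteq> 0" by (auto simp: n_def)
      then show False using True by (metis leading_coeff_0_iff)
    qed
    then have "degree F = n" using n2 by (auto simp: n_def)
    then have "coeff F n \<noteq> 0" using n2 by (metis leading_coeff_0_iff not_numeral_le_zero degree_0)
    then show ?thesis using True by (simp add: h_def)
  next
    case False
    have "c \<noteq> coeff F n / coeff G n" using c by (auto simp: B_def)
    then show ?thesis using False by (simp add: h_def field_simps)
  qed
  then have dh: "degree h \<ge> n" by (simp add: le_degree)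
  then obtain r1 where r1: "poly h r1 = 0" using poly_has_root[of h] n2 by auto
  then obtain q where q: "h = [:-r1, 1:] * q" using poly_eq_0_iff_dvd by blast
  have "h \<noteq> 0" using ch by auto
  then have "q \<noteq> 0" using q by auto
  then have "degree h = 1 + degree q" unfolding q by (subst degree_mult_eq) auto
  then obtain r2 where r2: "poly q r2 = 0" using poly_has_root[of q] n2 dh by auto
  have hr2: "poly h r2 = 0" using q r2 by simp
  have good: "poly G r \<noteq> 0 \<and> c = poly F r / poly G r" if "poly h r = 0" for r
  proof -
    have e: "poly F r = c * poly G r" using that by (simp add: h_def)
    have "poly G r \<noteq> 0"
    proof
      assume "poly G r = 0"
      then show False using coprime_no_common_root[OF cop, of r] e by simp
    qed
    then show ?thesis using e by simp
  qed
  have notS: "r \<notin> S" if "poly h r = 0" for r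
    using good[OF that] c by (auto simp: B_def)
  have "r1 \<noteq> r2"
  proof
    assume "r1 = r2"
    then obtain q2 where "q = [:-r1, 1:] * q2" using r2 poly_eq_0_iff_dvd by blast
    define pp where "pp = [:-r1, 1:]"
    have hq: "h = pp * (pp * q2)" using q \<open>q = [:-r1, 1:] * q2\<close> by (simp add: pp_def)
    have pr: "poly pp r1 = 0" by (simp add: pp_def)
    have "poly (pderiv (pp * (pp * q2))) r1 = 0" by (simp add: pderiv_mult pr)
    then have "poly (pderiv h) r1 = 0" using hq by simp
    then have d: "poly (pderiv F) r1 = c * poly (pderiv G) r1" by (simp add: h_def pderiv_diff pderiv_smult)
    have "poly F r1 = c * poly G r1" using r1 by (simp add: h_def)
    then have "poly W r1 = 0" using d by (simp add: W_def algebra_simps)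
    then have "c \<in> B" using good[OF r1] by (auto simp: B_def)
    with c show False by simp
  qed
  moreover have "poly F r1 * poly G r2 = poly F r2 * poly G r1"
    using good[OF r1] good[OF hr2] by (simp add: field_simps)
  ultimately show False using inj notS[OF r1] notS[OF hr2] by blast
qed

lemma deg1_poly:
  fixes F :: "complex poly"
  assumes "degree F \<le> 1"
  shows "poly F t = coeff F 0 + t * coeff F 1"
proof -
  have "F = [:coeff F 0, coeff F 1:]"
  proof (rule poly_eqI)
    fix n show "coeff F n = coeff [:coeff F 0, coeff F 1:] n"
      using assms by (cases n; cases "n - 1") (auto simp: coeff_eq_0)
  qed
  then show ?thesis by (metis poly_pCons poly_0 mult_zero_right add_0_right mult.commute)
qed

lemma det_nz:
  fixes F G :: "complex poly"
  assumes d: "degree F \<le> 1" "degree G \<le> 1" and fin: "finite S"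
    and inj: "\<And>t1 t2. t1 \<notin> S \<Longrightarrow> t2 \<notin> S \<Longrightarrow> poly F t1 * poly G t2 = poly F t2 * poly G t1 \<Longrightarrow> t1 = t2"
  shows "coeff F 1 * coeff G 0 - coeff F 0 * coeff G 1 \<noteq> 0"
proof
  assume det: "coeff F 1 * coeff G 0 - coeff F 0 * coeff G 1 = 0"
  have pF: "poly F t = coeff F 0 + t * coeff F 1" for t using deg1_poly d by simp
  have pG: "poly G t = coeff G 0 + t * coeff G 1" for t using deg1_poly d by simp
  obtain t1 where t1: "t1 \<notin> S" using ex_new_if_finite[OF infinite_UNIV_char_0 fin] by blast
  obtain t2 where t2: "t2 \<notin> insert t1 S" using ex_new_if_finite[OF infinite_UNIV_char_0, of "insert t1 S"] fin by blast
  have "poly F t1 * poly G t2 - poly F t2 * poly G t1 = (t1 - t2) * (coeff F 1 * coeff G 0 - coeff F 0 * coeff G 1)"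
    unfolding pF pG by (simp add: algebra_simps)
  then have "poly F t1 * poly G t2 = poly F t2 * poly G t1" using det by simp
  then show False using inj t1 t2 by auto
qed


lemma form_minus: "form n f \<Longrightarrow> form n g \<Longrightarrow> form n (\<lambda>v. f v - g v)"
  using fadd[of n f "\<lambda>v. (-1) * g v"] form_scale[of n g "-1"] by simp

theorem lemma2p12:
  fixes \<phi> :: "complex^'h::finite \<Rightarrow> complex^(bool^'m::finite)"
    and i j :: 'm
    and \<psi>i \<psi>j :: "(complex^2) set \<Rightarrow> (complex^'h) set"
  assumes "factorization_structure \<phi>"
    and "factorization_curve \<phi> i \<psi>i"
    and "factorization_curve \<phi> j \<psi>j"
  shows "\<psi>i ` proj_points = \<psi>j ` proj_points \<longleftrightarrow>
         (\<exists>A :: complex^2 \<Rightarrow> complex^2. Vector_Spaces.linear (*s) (*s) A \<and> bij A \<and>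
            (\<forall>L\<in>proj_points. \<psi>i L = \<psi>j (A ` L)))"
proof
  assume img: "\<psi>i ` proj_points = \<psi>j ` proj_points"
  have lin: "Vector_Spaces.linear (*s) (*s) \<phi>" and injp: "inj \<phi>"
    using assms(1) by (auto simp: factorization_structure_def)
  obtain d1 p1 where C1: "\<And>v. v \<noteq> 0 \<Longrightarrow> hom_poly_map d1 p1 v \<noteq> 0 \<and> \<psi>i (vec.span {v}) = vec.span {hom_poly_map d1 p1 v}"
    and E1: "\<And>v. E \<phi> i v (hom_poly_map d1 p1 v)"
    using curve_facts[OF assms(1,2)] by blast
  obtain d2 p2 where C2: "\<And>v. v \<noteq> 0 \<Longrightarrow> hom_poly_map d2 p2 v \<noteq> 0 \<and> \<psi>j (vec.span {v}) = vec.span {hom_poly_map d2 p2 v}"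
    and E2: "\<And>v. E \<phi> j v (hom_poly_map d2 p2 v)"
    using curve_facts[OF assms(1,3)] by blast
  define x where "x t = hom_poly_map d1 p1 (e1 t)" for t
  have x0: "x t \<noteq> 0" for t using C1[OF e1_neq0] by (simp add: x_def)
  have "\<exists>s. \<phi> (x 0) $ upd s j False \<noteq> 0 \<or> \<phi> (x 0) $ upd s j True \<noteq> 0"
  proof (rule ccontr)
    assume "\<not> ?thesis"
    then have h: "\<And>s. \<phi> (x 0) $ upd s j False = 0 \<and> \<phi> (x 0) $ upd s j True = 0" by blast
    have "\<phi> (x 0) $ r = 0" for r
    proof -
      have "\<phi> (x 0) $ r = \<phi> (x 0) $ upd r j (r$j)" by (simp add: upd_self)
      then show ?thesis using h[of r] by (cases "r$j") simp_all
    qed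
    then have "\<phi> (x 0) = \<phi> 0" using vec.linear_0[OF lin] by (simp add: vec_eq_iff)
    then have "x 0 = 0" using injp by (meson injD)
    with x0 show False by blast
  qed
  then obtain s where s: "\<phi> (x 0) $ upd s j False \<noteq> 0 \<or> \<phi> (x 0) $ upd s j True \<noteq> 0" by blast
  obtain qa where qa: "\<And>t. \<phi> (x t) $ upd s j False = poly qa t"
    using form_poly[OF form_phi[OF lin, of d1 p1 "upd s j False"]] unfolding x_def by blast
  obtain qb where qb: "\<And>t. \<phi> (x t) $ upd s j True = poly qb t"
    using form_poly[OF form_phi[OF lin, of d1 p1 "upd s j True"]] unfolding x_def by blast
  define F0 where "F0 = qb"
  define G0 where "G0 = - qa"
  define g where "g = gcd F0 G0"
  have "F0 \<noteq> 0 \<or> G0 \<noteq> 0" using s qa[of 0] qb[of 0] by (auto simp: F0_def G0_def)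
  then have g0: "g \<noteq> 0" by (simp add: g_def)
  have "\<exists>a' b'. F0 = a' * gcd F0 G0 \<and> G0 = b' * gcd F0 G0 \<and> coprime a' b'"
    using g0 unfolding g_def by (rule gcd_coprime_exists)
  then obtain F G where FG: "F0 = F * g" "G0 = G * g" and cop: "coprime F G"
    unfolding g_def by blast
  define S where "S = {t. poly g t = 0}"
  have finS: "finite S" using poly_roots_finite[OF g0] by (simp add: S_def)
  define w where "w t = (vector [poly F t, poly G t] :: complex^2)" for t
  have w0: "w t \<noteq> 0" for t
    using coprime_no_common_root[OF cop, of t] by (auto simp: w_def vector_2_neq0)
  have R: "\<psi>i (vec.span {e1 t}) = \<psi>j (vec.span {w t})" if tS: "t \<notin> S" for t
  proof -
    have "\<psi>i (vec.span {e1 t}) \<in> \<psi>j ` proj_points" using img e1_span_proj by blast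
    then obtain L' where L': "L' \<in> proj_points" "\<psi>i (vec.span {e1 t}) = \<psi>j L'" by blast
    then obtain w' where w': "w' \<noteq> 0" "L' = vec.span {w'}" using proj_points_iff by blast
    have "x t \<in> vec.span {x t}" by (rule vec.span_base) simp
    also have "\<dots> = \<psi>i (vec.span {e1 t})" using C1[OF e1_neq0] by (simp add: x_def)
    also have "\<dots> = vec.span {hom_poly_map d2 p2 w'}" using L' w' C2 by simp
    finally obtain c where "x t = c *s hom_poly_map d2 p2 w'" by (auto simp: vec.span_singleton)
    then have "E \<phi> j w' (x t)" using E_scale[OF lin E2] by simp
    then have "w'$1 * \<phi> (x t) $ upd s j False + w'$2 * \<phi> (x t) $ upd s j True = 0"
      unfolding E_def by blast
    then have z: "w'$1 * poly qa t + w'$2 * poly qb t = 0" by (simp only: qa qb)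
    have b: "poly qb t = poly F t * poly g t" using FG(1) by (simp add: F0_def)
    have a: "poly qa t = - (poly G t * poly g t)"
    proof -
      have "qa = - (G * g)" using FG(2) unfolding G0_def by (metis minus_minus)
      then show ?thesis by simp
    qed
    have "poly g t * (w'$1 * poly G t - w'$2 * poly F t) = - (w'$1 * poly qa t + w'$2 * poly qb t)"
      unfolding a b by (simp add: algebra_simps)
    then have "poly g t * (w'$1 * poly G t - w'$2 * poly F t) = 0" using z by simp
    then have "w'$1 * poly G t = w'$2 * poly F t" using tS by (simp add: S_def)
    then have "vec.span {w'} = vec.span {w t}"
      using span_eq_2[OF w'(1) w0] by (simp add: w_def)
    then show ?thesis using L' w' by simp
  qed
  have I: "t1 = t2" if "t1 \<notin> S" "t2 \<notin> S" "poly F t1 * poly G t2 = poly F t2 * poly G t1" for t1 t2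
  proof (rule ccontr)
    assume ne: "t1 \<noteq> t2"
    have "vec.span {w t1} = vec.span {w t2}" using span_eq_2[OF w0 w0] that(3) by (simp add: w_def)
    then have "\<psi>i (vec.span {e1 t1}) = \<psi>i (vec.span {e1 t2})" using R that by simp
    then have "vec.span {x t1} = vec.span {x t2}" using C1[OF e1_neq0] by (simp add: x_def)
    then have "x t1 \<in> vec.span {x t2}" using vec.span_base[of "x t1" "{x t1}"] by simp
    then obtain c where "x t1 = c *s x t2" by (auto simp: vec.span_singleton)
    then have Ea: "E \<phi> i (e1 t2) (x t1)" using E_scale[OF lin E1] by (simp add: x_def)
    have Eb: "E \<phi> i (e1 t1) (x t1)" using E1 by (simp add: x_def)
    have "(e1 t1)$1 * (e1 t2)$2 - (e1 t1)$2 * (e1 t2)$1 \<noteq> 0" using ne by simp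
    from E_inj[OF lin injp Eb Ea this] x0 show False by blast
  qed
  have deg: "degree F \<le> 1 \<and> degree G \<le> 1" using deg_le1[OF cop finS I] by blast
  define a where "a = coeff F 1"
  define b where "b = coeff F 0"
  define c where "c = coeff G 1"
  define dd where "dd = coeff G 0"
  have det: "a * dd - b * c \<noteq> 0"
    using det_nz[of F G S] deg finS I by (simp add: a_def b_def c_def dd_def)
  define M :: "complex^2^2" where "M = vector [vector [a, b], vector [c, dd]]"
  define D where "D = a * dd - b * c"
  have D0: "D \<noteq> 0" using det by (simp add: D_def)
  define Mi :: "complex^2^2" where "Mi = vector [vector [dd / D, - b / D], vector [- c / D, a / D]]"
  have Mv: "M *v v = vector [a * v$1 + b * v$2, c * v$1 + dd * v$2]" for v
    by (simp add: M_def matrix_vector_mult_def vec_eq_iff forall_2 sum_2)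
  have Miv: "Mi *v v = vector [(dd * v$1 - b * v$2) / D, (a * v$2 - c * v$1) / D]" for v
    by (simp add: Mi_def matrix_vector_mult_def vec_eq_iff forall_2 sum_2 diff_divide_distrib)
  have linA: "Vector_Spaces.linear (*s) (*s) ((*v) M)" by (rule matrix_vector_mul_linear_gen)
  have bijA: "bij ((*v) M)"
  proof (rule o_bij)
    show "(*v) Mi \<circ> (*v) M = id"
    proof (rule ext)
      fix v show "((*v) Mi \<circ> (*v) M) v = id v"
        using D0 by (simp add: Mv Miv vec_eq_iff forall_2 field_simps; simp add: D_def algebra_simps)
    qed
    show "(*v) M \<circ> (*v) Mi = id"
    proof (rule ext)
      fix v show "((*v) M \<circ> (*v) Mi) v = id v"
        using D0 by (simp add: Mv Miv vec_eq_iff forall_2 field_simps; simp add: D_def algebra_simps)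
    qed
  qed
  have Mnz: "M *v v \<noteq> 0" if "v \<noteq> 0" for v
  proof
    assume "M *v v = 0"
    then have "M *v v = M *v 0" by simp
    then have "v = 0" by (rule injD[OF bij_is_inj[OF bijA]])
    with that show False by simp
  qed
  have Me: "M *v e1 t = w t" for t
    using deg1_poly[of F t] deg1_poly[of G t] deg
    by (simp add: Mv w_def a_def b_def c_def dd_def algebra_simps)
  have ext: "\<psi>i L = \<psi>j ((*v) M ` L)" if L: "L \<in> proj_points" for L
  proof -
    obtain v where v: "v \<noteq> 0" "L = vec.span {v}" using L proj_points_iff by blast
    have img_span: "(*v) M ` L = vec.span {M *v v}"
      using vec.span_image[of M "{v}"] v by simp
    have minor: "hom_poly_map d1 p1 v $ k * hom_poly_map d2 p2 (M *v v) $ l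
        - hom_poly_map d1 p1 v $ l * hom_poly_map d2 p2 (M *v v) $ k = 0" for k l
    proof -
      let ?m = "\<lambda>u. hom_poly_map d1 p1 u $ k * hom_poly_map d2 p2 (M *v u) $ l
        - hom_poly_map d1 p1 u $ l * hom_poly_map d2 p2 (M *v u) $ k"
      have g1: "form 1 (\<lambda>u. a * u$1 + b * u$2)" by (intro fadd form_scale form_x form_y)
      have g2: "form 1 (\<lambda>u. c * u$1 + dd * u$2)" by (intro fadd form_scale form_x form_y)
      have P2f: "form d2 (\<lambda>u. hom_poly_map d2 p2 (M *v u) $ r)" for r
        using form_comp[OF form_hom g1 g2] by (simp add: Mv)
      have fm: "form (d1 + d2) ?m"
        by (intro form_minus form_mult form_hom P2f)
      have "{t. t \<notin> S} \<subseteq> {t. ?m (e1 t) = 0}"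
      proof
        fix t assume "t \<in> {t. t \<notin> S}"
        then have "\<psi>i (vec.span {e1 t}) = \<psi>j (vec.span {M *v e1 t})" using R Me by simp
        then have "vec.span {hom_poly_map d1 p1 (e1 t)} = vec.span {hom_poly_map d2 p2 (M *v e1 t)}"
          using C1[OF e1_neq0] C2[OF Mnz[OF e1_neq0]] by simp
        then show "t \<in> {t. ?m (e1 t) = 0}"
          using span_eq_minors[OF conjunct1[OF C1[OF e1_neq0]] conjunct1[OF C2[OF Mnz[OF e1_neq0]]]]
          by simp
      qed
      moreover have "infinite {t. t \<notin> S}"
        using Diff_infinite_finite[OF finS infinite_UNIV_char_0] by (simp add: set_diff_eq)
      ultimately have "infinite {t. ?m (e1 t) = 0}" using finite_subset by blast
      from form_vanish[OF fm this] show ?thesis .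
    qed
    have "vec.span {hom_poly_map d1 p1 v} = vec.span {hom_poly_map d2 p2 (M *v v)}"
      using span_eq_minors[OF conjunct1[OF C1[OF v(1)]] conjunct1[OF C2[OF Mnz[OF v(1)]]]] minor
      by simp
    then show ?thesis using C1[OF v(1)] C2[OF Mnz[OF v(1)]] v img_span by simp
  qed
  show "\<exists>A :: complex^2 \<Rightarrow> complex^2. Vector_Spaces.linear (*s) (*s) A \<and> bij A \<and>
            (\<forall>L\<in>proj_points. \<psi>i L = \<psi>j (A ` L))"
    using linA bijA ext by blast
next
  assume "\<exists>A :: complex^2 \<Rightarrow> complex^2. Vector_Spaces.linear (*s) (*s) A \<and> bij A \<and>
            (\<forall>L\<in>proj_points. \<psi>i L = \<psi>j (A ` L))"
  then obtain A :: "complex^2 \<Rightarrow> complex^2" where lA: "Vector_Spaces.linear (*s) (*s) A"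
    and bA: "bij A" and eq: "\<forall>L\<in>proj_points. \<psi>i L = \<psi>j (A ` L)" by blast
  have A0: "A 0 = 0" using vec.linear_0[OF lA] .
  have Aspan: "A ` vec.span {v} = vec.span {A v}" for v
    using vec.linear_span_image[OF lA, of "{v}"] by simp
  have Anz: "A v \<noteq> 0" if "v \<noteq> 0" for v
  proof
    assume "A v = 0"
    then have "A v = A 0" using A0 by simp
    then have "v = 0" by (rule injD[OF bij_is_inj[OF bA]])
    with that show False by simp
  qed
  show "\<psi>i ` proj_points = \<psi>j ` proj_points"
  proof
    show "\<psi>i ` proj_points \<subseteq> \<psi>j ` proj_points"
    proof
      fix y assume "y \<in> \<psi>i ` proj_points"
      then obtain L where L: "L \<in> proj_points" "y = \<psi>i L" by blast
      then obtain v where v: "v \<noteq> 0" "L = vec.span {v}" using proj_points_iff by blast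
      have "A ` L \<in> proj_points" unfolding v(2) Aspan proj_points_iff using Anz[OF v(1)] by blast
      then show "y \<in> \<psi>j ` proj_points" using L eq by auto
    qed
  next
    show "\<psi>j ` proj_points \<subseteq> \<psi>i ` proj_points"
    proof
      fix y assume "y \<in> \<psi>j ` proj_points"
      then obtain L' where L': "L' \<in> proj_points" "y = \<psi>j L'" by blast
      then obtain w where w: "w \<noteq> 0" "L' = vec.span {w}" using proj_points_iff by blast
      obtain v where wv: "w = A v" using bij_is_surj[OF bA] by (metis surjD)
      then have "v \<noteq> 0" using w A0 by auto
      then have Lp: "vec.span {v} \<in> proj_points" using proj_points_iff by blast
      have "\<psi>i (vec.span {v}) = \<psi>j (A ` vec.span {v})" using eq Lp by blast
      also have "\<dots> = \<psi>j (vec.span {A v})" by (simp only: Aspan)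
      also have "\<dots> = y" using L'(2) w(2) wv by simp
      finally have "y = \<psi>i (vec.span {v})" by simp
      then show "y \<in> \<psi>i ` proj_points" using Lp by blast
    qed
  qed
qed

end
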